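(* Let $\mathcal{G}=(V,E)$ be a connected hypergraph with $n>2$ vertices. Then $$\lambda_n(L_{\mathcal{G}})\ge\min\left\{\frac{d_{i_1}+d_{i_2}+\dots+d_{i_{|e|}}-|e|}{|e|}:\ e=\{i_1,\dots,i_{|e|}\}\in E\right\}.$$
   Context: A hypergraph $\mathcal{G}=(V,E)$ has a finite vertex set $V$ and a set $E$ of subsets of $V$ (edges), each of cardinality at least $2$. The degree $d_i$ is the number of edges containing $i$. The Laplacian $L_{\mathcal{G}}$ has $(L_{\mathcal{G}})_{ii}=d_i$ and $(L_{\mathcal{G}})_{ij}=-\sum_{e\in E,\, i,j\in e}\frac{1}{|e|-1}$ for $i\ne j$; $\lambda_n(L_{\mathcal{G}})$ is its largest eigenvalue. *)

theory Defs
  imports "HOL-Analysis.Analysis"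
begin

text \<open>A hypergraph with vertex set the finite type 'n (V = UNIV) and edge set E.\<close>

definition hypergraph :: "'n::finite set set \<Rightarrow> bool" where
  "hypergraph E \<longleftrightarrow> (\<forall>e\<in>E. card e \<ge> 2)"

definition hdeg :: "'n::finite set set \<Rightarrow> 'n \<Rightarrow> nat" where
  "hdeg E i = card {e\<in>E. i \<in> e}"

definition hadj :: "'n::finite set set \<Rightarrow> ('n \<times> 'n) set" where
  "hadj E = {(i, j). \<exists>e\<in>E. i \<in> e \<and> j \<in> e}"

definition hconnected :: "'n::finite set set \<Rightarrow> bool" where
  "hconnected E \<longleftrightarrow> (\<forall>i j. (i, j) \<in> (hadj E)\<^sup>*)"

definition hlaplacian :: "'n::finite set set \<Rightarrow> real^'n^'n" where
  "hlaplacian E = (\<chi> i j. if i = j then real (hdeg E i)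
      else - (\<Sum>e\<in>{e\<in>E. i \<in> e \<and> j \<in> e}. 1 / (real (card e) - 1)))"

definition real_eigenvalues :: "real^'n^'n \<Rightarrow> real set" where
  "real_eigenvalues A = {\<mu>. \<exists>v. v \<noteq> 0 \<and> A *v v = \<mu> *\<^sub>R v}"

definition largest_eigenvalue :: "real^'n^'n \<Rightarrow> real" where
  "largest_eigenvalue A = Max (real_eigenvalues A)"

end

theory Submission
  imports Defs
begin

lemma sym_inner:
  fixes A :: "real^'n^'n"
  assumes "transpose A = A"
  shows "x \<bullet> (A *v y) = (A *v x) \<bullet> y"
proof -
  have "x \<bullet> (A *v y) = (x v* A) \<bullet> y" by (simp add: dot_lmul_matrix)
  also have "x v* A = transpose A *v x" by (simp add: vector_transpose_matrix[symmetric])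
  finally show ?thesis using assms by simp
qed

lemma quad_aux:
  fixes a c :: real
  assumes "\<And>t. 0 \<le> 2*t*a + t^2*c" and "a \<ge> 0"
  shows "a = 0"
proof (rule ccontr)
  assume "a \<noteq> 0" hence a: "a > 0" using assms by simp
  define s where "s = a / (\<bar>c\<bar>+1)"
  have s: "s > 0" using a by (simp add: s_def)
  have "0 \<le> 2*(-s)*a + (-s)^2*c" by (rule assms)
  hence "0 \<le> s * (-2*a + s*c)" by (simp add: power2_eq_square algebra_simps)
  hence "0 \<le> -2*a + s*c" using s by (simp add: zero_le_mult_iff)
  moreover have "s*c \<le> s*\<bar>c\<bar>" using s by (simp add: mult_left_mono)
  moreover have "s*\<bar>c\<bar> \<le> a" unfolding s_def using a
    by (simp add: field_simps)
  ultimately show False using a by linarith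
qed

lemma rayleigh_eigen:
  fixes A :: "real^'n^'n"
  assumes "transpose A = A"
  shows "\<exists>\<mu> v. v \<noteq> 0 \<and> A *v v = \<mu> *\<^sub>R v \<and> (\<forall>x. x \<bullet> (A *v x) \<le> \<mu> * (x \<bullet> x))"
proof -
  let ?S = "sphere (0::real^'n) 1"
  have "\<exists>x\<in>?S. \<forall>y\<in>?S. y \<bullet> (A *v y) \<le> x \<bullet> (A *v x)"
    apply (rule continuous_attains_sup)
      apply (simp add: compact_sphere)
     apply (metis (no_types) norm_axis_1 mem_sphere_0 empty_iff)
    apply (intro continuous_intros matrix_vector_mult_linear_continuous_on)
    done
  then obtain x0 where x0: "norm x0 = 1" and mx: "\<And>y. norm y = 1 \<Longrightarrow> y \<bullet> (A *v y) \<le> x0 \<bullet> (A *v x0)"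
    by auto
  define \<mu> where "\<mu> = x0 \<bullet> (A *v x0)"
  have x0x0: "x0 \<bullet> x0 = 1" using x0 by (simp add: norm_eq_sqrt_inner)
  have bound: "x \<bullet> (A *v x) \<le> \<mu> * (x \<bullet> x)" for x
  proof (cases "x = 0")
    case True then show ?thesis by simp
  next
    case False
    define y where "y = (1 / norm x) *\<^sub>R x"
    have "norm y = 1" using False by (simp add: y_def)
    hence "y \<bullet> (A *v y) \<le> \<mu>" using mx \<mu>_def by simp
    moreover have "y \<bullet> (A *v y) = (x \<bullet> (A *v x)) / (norm x)^2"
      by (simp add: y_def matrix_vector_mult_scaleR power2_eq_square)
    moreover have "x \<bullet> x = (norm x)^2" by (simp add: power2_norm_eq_inner)
    ultimately show ?thesis using False
      by (simp add: divide_le_eq)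
  qed
  define w where "w = \<mu> *\<^sub>R x0 - A *v x0"
  have "0 \<le> 2*t*(w \<bullet> w) + t^2*(\<mu> * (w \<bullet> w) - w \<bullet> (A *v w))" for t
  proof -
    have "(x0 + t *\<^sub>R w) \<bullet> (A *v (x0 + t *\<^sub>R w)) \<le> \<mu> * ((x0 + t *\<^sub>R w) \<bullet> (x0 + t *\<^sub>R w))"
      by (rule bound)
    moreover have "w \<bullet> (A *v x0) = (A *v w) \<bullet> x0" using sym_inner[OF assms] by simp
    moreover have "x0 \<bullet> (A *v w) = (A *v x0) \<bullet> w" using sym_inner[OF assms] by simp
    moreover have "w \<bullet> w = \<mu> * (x0 \<bullet> w) - (A *v x0) \<bullet> w"
      by (simp add: w_def inner_diff_left)
    ultimately have h: "(x0 + t *\<^sub>R w) \<bullet> (A *v (x0 + t *\<^sub>R w)) \<le> \<mu> * ((x0 + t *\<^sub>R w) \<bullet> (x0 + t *\<^sub>R w))"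
      and s1: "w \<bullet> (A *v x0) = (A *v w) \<bullet> x0" and s2: "x0 \<bullet> (A *v w) = (A *v x0) \<bullet> w"
      and s3: "w \<bullet> w = \<mu> * (x0 \<bullet> w) - (A *v x0) \<bullet> w" by auto
    have l: "(x0 + t *\<^sub>R w) \<bullet> (A *v (x0 + t *\<^sub>R w)) = \<mu> + 2*t*((A *v x0) \<bullet> w) + t^2 * (w \<bullet> (A *v w))"
    proof -
      have "(x0 + t *\<^sub>R w) \<bullet> (A *v (x0 + t *\<^sub>R w)) = x0 \<bullet> (A *v x0) + t * (x0 \<bullet> (A *v w)) + t * (w \<bullet> (A *v x0)) + t*t*(w \<bullet> (A *v w))"
        by (simp add: matrix_vector_right_distrib matrix_vector_mult_scaleR inner_add_left inner_add_right algebra_simps)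
      also have "\<dots> = \<mu> + 2*t*((A *v x0) \<bullet> w) + t^2 * (w \<bullet> (A *v w))"
        using s1 s2 by (simp add: \<mu>_def inner_commute power2_eq_square)
      finally show ?thesis .
    qed
    have r: "(x0 + t *\<^sub>R w) \<bullet> (x0 + t *\<^sub>R w) = 1 + 2*t*(x0 \<bullet> w) + t^2*(w \<bullet> w)"
      by (simp add: inner_add_left inner_add_right x0x0 inner_commute power2_eq_square algebra_simps)
    have "0 \<le> \<mu> * (1 + 2*t*(x0 \<bullet> w) + t^2*(w \<bullet> w)) - (\<mu> + 2*t*((A *v x0) \<bullet> w) + t^2 * (w \<bullet> (A *v w)))"
      using h l r by simp
    also have "\<dots> = 2*t*(\<mu> * (x0 \<bullet> w) - (A *v x0) \<bullet> w) + t^2*(\<mu> * (w \<bullet> w) - w \<bullet> (A *v w))"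
      by (simp add: algebra_simps)
    finally show ?thesis using s3 by simp
  qed
  hence "w \<bullet> w = 0" by (intro quad_aux) auto
  hence "A *v x0 = \<mu> *\<^sub>R x0" by (simp add: w_def)
  moreover have "x0 \<noteq> 0" using x0 by auto
  ultimately show ?thesis using bound by blast
qed

lemma eig_finite:
  fixes A :: "real^'n^'n"
  assumes "transpose A = A"
  shows "finite (real_eigenvalues A)"
proof -
  let ?R = "real_eigenvalues A"
  define g where "g l = (SOME u. u \<noteq> 0 \<and> A *v u = l *\<^sub>R u)" for l
  have g: "g l \<noteq> 0 \<and> A *v g l = l *\<^sub>R g l" if "l \<in> ?R" for l
    using that unfolding g_def real_eigenvalues_def by (metis (mono_tags, lifting) mem_Collect_eq someI_ex)
  have inj: "inj_on g ?R"
  proof (rule inj_onI)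
    fix a b assume a: "a \<in> ?R" and b: "b \<in> ?R" and e: "g a = g b"
    have "a *\<^sub>R g a = b *\<^sub>R g a" using g[OF a] g[OF b] e by metis
    thus "a = b" using g[OF a] by (simp add: scaleR_cancel_right)
  qed
  have "pairwise orthogonal (g ` ?R)"
  proof (rule pairwiseI, clarify)
    fix a b assume a: "a \<in> ?R" and b: "b \<in> ?R" and ne: "g a \<noteq> g b"
    hence ab: "a \<noteq> b" by auto
    have "a * (g a \<bullet> g b) = (A *v g a) \<bullet> g b" using g[OF a] by simp
    also have "\<dots> = g a \<bullet> (A *v g b)" using sym_inner[OF assms] by simp
    also have "\<dots> = b * (g a \<bullet> g b)" using g[OF b] by simp
    finally have "(a - b) * (g a \<bullet> g b) = 0" by (simp add: algebra_simps)
    thus "orthogonal (g a) (g b)" using ab by (simp add: orthogonal_def)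
  qed
  hence "finite (g ` ?R)" by (rule pairwise_orthogonal_imp_finite)
  thus ?thesis using inj by (rule finite_imageD)
qed

lemma lap_sym: "transpose (hlaplacian E) = hlaplacian E"
  unfolding transpose_def hlaplacian_def by (simp add: vec_eq_iff conj_commute eq_commute)

lemma lap_diag: "hlaplacian E $ i $ i = real (hdeg E i)"
  unfolding hlaplacian_def by simp

theorem corollary5:
  fixes E :: "'n::finite set set"
  assumes "hypergraph E"
    and "hconnected E"
    and "CARD('n) > 2"
  shows "largest_eigenvalue (hlaplacian E) \<ge>
    Min ((\<lambda>e. ((\<Sum>i\<in>e. real (hdeg E i)) - real (card e)) / real (card e)) ` E)"
proof -
  let ?L = "hlaplacian E"
  let ?f = "\<lambda>e. ((\<Sum>i\<in>e. real (hdeg E i)) - real (card e)) / real (card e)"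
  obtain \<mu> v where v: "v \<noteq> 0" "?L *v v = \<mu> *\<^sub>R v" and bd: "\<And>x. x \<bullet> (?L *v x) \<le> \<mu> * (x \<bullet> x)"
    using rayleigh_eigen[OF lap_sym] by blast
  have "\<mu> \<in> real_eigenvalues ?L" using v unfolding real_eigenvalues_def by blast
  hence mu: "\<mu> \<le> largest_eigenvalue ?L"
    unfolding largest_eigenvalue_def using eig_finite[OF lap_sym] by (rule Max_ge[rotated])
  have deg: "real (hdeg E i) \<le> \<mu>" for i
  proof -
    have "axis i 1 \<bullet> (?L *v axis i 1) \<le> \<mu> * (axis i (1::real) \<bullet> axis i 1)" by (rule bd)
    thus ?thesis by (simp add: matrix_vector_mult_basis inner_axis' inner_axis_axis column_def lap_diag)
  qed
  have "E \<noteq> {}"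
  proof
    assume E: "E = {}"
    have "card (UNIV :: 'n set) \<ge> 2" using assms(3) by simp
    then obtain i j :: 'n where "i \<noteq> j"
      by (metis card_2_iff' ex_card obtain_subset_with_card_n)
    moreover have "hadj E = {}" using E by (simp add: hadj_def)
    ultimately show False using assms(2) unfolding hconnected_def by auto
  qed
  then obtain e0 where e0: "e0 \<in> E" by blast
  have fin: "finite E" by simp
  have "Min (?f ` E) \<le> ?f e0" using fin e0 by simp
  also have "?f e0 \<le> \<mu>"
  proof -
    have c: "card e0 \<ge> 2" using assms(1) e0 unfolding hypergraph_def by blast
    have "(\<Sum>i\<in>e0. real (hdeg E i)) \<le> (\<Sum>i\<in>e0. \<mu>)" by (intro sum_mono deg)
    hence "(\<Sum>i\<in>e0. real (hdeg E i)) \<le> real (card e0) * \<mu>" by simp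
    hence "(\<Sum>i\<in>e0. real (hdeg E i)) - real (card e0) \<le> real (card e0) * \<mu>" by linarith
    thus ?thesis using c by (simp add: divide_le_eq mult.commute)
  qed
  finally show ?thesis using mu by linarith
qed

end
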